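(* Let $K\ge 2$ and let $p,q$ be real numbers with $0<q<p$ and $q=\frac{1-p}{K-1}$. Let $N\ge 1$ and let $y_1,\dots,y_N\in\{1,\dots,K\}$ be observed outputs of the randomized response mechanism, with empirical histogram $\phi\in\Delta$, $\phi_y=\frac{1}{N}|\{u: y_u=y\}|$. Then the likelihood $L(\theta\mid\phi)=\prod_{u=1}^N\bigl(q+(p-q)\theta_{y_u}\bigr)$ has a unique maximizer over $\theta\in\Delta$, and this maximizer equals $\mathrm{MLE}^*(\phi)$.
   Context: $\Delta=\{\theta\in\mathbb{R}^K:\theta_i\ge 0,\ \sum_i\theta_i=1\}$. The randomized response (RR) mechanism on $\{1,\dots,K\}$ outputs, on input $x$, the value $y$ with probability $p$ if $y=x$ and $q$ otherwise; thus if the input is distributed according to $\theta\in\Delta$, the output $y$ has probability $q+(p-q)\theta_y$. Throughout, RR is an $\varepsilon$-locally differentially private mechanism with $\varepsilon=\log(p/q)>0$, so $0<q<p$. Define $\mathrm{MLE}^*(\phi)$ as follows. For a real $\tau$ let $m(\tau)=|\{i:\phi_i<\tau\}|$ and, when $\sum_{i:\phi_i\ge\tau}\phi_i>0$, $c_\tau=\frac{1-m(\tau)\,q}{\sum_{i:\phi_i\ge\tau}\phi_i}$. Let $\tau^*$ be the smallest $\tau\in\{\phi_1,\dots,\phi_K\}$ such that $c_\tau\phi_i\ge q$ for every $i$ with $\phi_i\ge\tau$. Then $\mathrm{MLE}^*(\phi)_i=0$ if $\phi_i<\tau^*$ and $\mathrm{MLE}^*(\phi)_i=\frac{c_{\tau^*}\phi_i-q}{p-q}$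 otherwise. *)

theory Defs
  imports Complex_Main
begin

definition simplex :: "nat \<Rightarrow> (nat \<Rightarrow> real) set" where
  "simplex K = {\<theta>. (\<forall>i\<in>{1..K}. 0 \<le> \<theta> i) \<and> (\<forall>i. i \<notin> {1..K} \<longrightarrow> \<theta> i = 0)
                    \<and> (\<Sum>i\<in>{1..K}. \<theta> i) = 1}"

definition hist :: "nat \<Rightarrow> (nat \<Rightarrow> nat) \<Rightarrow> nat \<Rightarrow> real" where
  "hist N y i = real (card {u\<in>{1..N}. y u = i}) / real N"

definition rr_lik :: "real \<Rightarrow> real \<Rightarrow> nat \<Rightarrow> (nat \<Rightarrow> nat) \<Rightarrow> (nat \<Rightarrow> real) \<Rightarrow> real" where
  "rr_lik p q N y \<theta> = (\<Prod>u\<in>{1..N}. q + (p - q) * \<theta> (y u))"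

definition mcount :: "nat \<Rightarrow> (nat \<Rightarrow> real) \<Rightarrow> real \<Rightarrow> nat" where
  "mcount K \<phi> \<tau> = card {i\<in>{1..K}. \<phi> i < \<tau>}"

definition upper_sum :: "nat \<Rightarrow> (nat \<Rightarrow> real) \<Rightarrow> real \<Rightarrow> real" where
  "upper_sum K \<phi> \<tau> = (\<Sum>i\<in>{i\<in>{1..K}. \<tau> \<le> \<phi> i}. \<phi> i)"

definition cconst :: "real \<Rightarrow> nat \<Rightarrow> (nat \<Rightarrow> real) \<Rightarrow> real \<Rightarrow> real" where
  "cconst q K \<phi> \<tau> = (1 - real (mcount K \<phi> \<tau>) * q) / upper_sum K \<phi> \<tau>"

definition tau_star :: "real \<Rightarrow> nat \<Rightarrow> (nat \<Rightarrow> real) \<Rightarrow> real" where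
  "tau_star q K \<phi> = Min {\<tau>. \<tau> \<in> \<phi> ` {1..K} \<and> 0 < upper_sum K \<phi> \<tau> \<and>
        (\<forall>i\<in>{1..K}. \<tau> \<le> \<phi> i \<longrightarrow> q \<le> cconst q K \<phi> \<tau> * \<phi> i)}"

definition MLE_star :: "real \<Rightarrow> real \<Rightarrow> nat \<Rightarrow> (nat \<Rightarrow> real) \<Rightarrow> nat \<Rightarrow> real" where
  "MLE_star p q K \<phi> i =
     (if i \<in> {1..K} \<and> tau_star q K \<phi> \<le> \<phi> i
      then (cconst q K \<phi> (tau_star q K \<phi>) * \<phi> i - q) / (p - q) else 0)"

end

theory Submission
  imports Defs
begin

lemma card_split:
  assumes "finite I"
  shows "card {i\<in>I. P i} + card {i\<in>I. \<not> P i} = card I"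
proof -
  have "{i\<in>I. P i} \<union> {i\<in>I. \<not> P i} = I" by auto
  moreover have "card ({i\<in>I. P i} \<union> {i\<in>I. \<not> P i}) = card {i\<in>I. P i} + card {i\<in>I. \<not> P i}"
    by (rule card_Un_disjoint) (use assms in auto)
  ultimately show ?thesis by simp
qed

lemma mcount_split:
  "real (mcount K \<phi> \<tau>) + real (card {i\<in>{1..K}. \<tau> \<le> \<phi> i}) = real K"
proof -
  have "card {i\<in>{1..K}. \<phi> i < \<tau>} + card {i\<in>{1..K}. \<not> \<phi> i < \<tau>} = card {1..K}"
    by (rule card_split) auto
  moreover have "{i\<in>{1..K}. \<not> \<phi> i < \<tau>} = {i\<in>{1..K}. \<tau> \<le> \<phi> i}" by auto
  ultimately show ?thesis unfolding mcount_def by (metis card_atLeastAtMost diff_Suc_1 of_nat_add)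
qed

lemma tau_in:
  fixes \<phi> :: "nat \<Rightarrow> real" and q :: real and K :: nat
  assumes K: "K \<ge> 1" and q: "0 < q" and Kq: "real K * q < 1"
    and nn: "\<forall>i\<in>{1..K}. 0 \<le> \<phi> i" and s1: "(\<Sum>i\<in>{1..K}. \<phi> i) = 1"
  defines "Ts \<equiv> {\<tau>. \<tau> \<in> \<phi> ` {1..K} \<and> 0 < upper_sum K \<phi> \<tau> \<and>
        (\<forall>i\<in>{1..K}. \<tau> \<le> \<phi> i \<longrightarrow> q \<le> cconst q K \<phi> \<tau> * \<phi> i)}"
  shows "tau_star q K \<phi> \<in> Ts \<and> (\<forall>t\<in>Ts. tau_star q K \<phi> \<le> t)"
proof -
  have fin: "finite Ts" unfolding Ts_def
    by (rule finite_subset[of _ "\<phi> ` {1..K}"]) auto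
  define t0 where "t0 = Max (\<phi> ` {1..K})"
  have ne: "\<phi> ` {1..K} \<noteq> {}" using K by auto
  have t0in: "t0 \<in> \<phi> ` {1..K}" unfolding t0_def using ne by (intro Max_in) auto
  have t0ge: "\<phi> i \<le> t0" if "i \<in> {1..K}" for i unfolding t0_def using that by (intro Max_ge) auto
  have "1 \<le> real K * t0"
  proof -
    have "(\<Sum>i\<in>{1..K}. \<phi> i) \<le> (\<Sum>i\<in>{1..K}. t0)" by (rule sum_mono) (use t0ge in auto)
    then show ?thesis using s1 by simp
  qed
  hence t0pos: "t0 > 0"
  proof -
    have "\<not> t0 \<le> 0"
    proof
      assume "t0 \<le> 0"
      hence "real K * t0 \<le> 0" by (simp add: mult_nonneg_nonpos)
      thus False using \<open>1 \<le> real K * t0\<close> by linarith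
    qed
    thus ?thesis by simp
  qed
  define M where "M = {i\<in>{1..K}. t0 \<le> \<phi> i}"
  have M_eq: "M = {i\<in>{1..K}. \<phi> i = t0}" unfolding M_def using t0ge by force
  have Mne: "M \<noteq> {}" using t0in unfolding M_eq by auto
  have Mfin: "finite M" unfolding M_def by auto
  have cM: "card M \<ge> 1" using Mne Mfin by (simp add: Suc_le_eq card_gt_0_iff)
  have us: "upper_sum K \<phi> t0 = real (card M) * t0"
    unfolding upper_sum_def M_def[symmetric] M_eq by simp
  have mc: "real (mcount K \<phi> t0) = real K - real (card M)"
    using mcount_split[of K \<phi> t0] unfolding M_def by simp
  have "t0 \<in> Ts"
  proof -
    have "q \<le> cconst q K \<phi> t0 * \<phi> i" if "i \<in> {1..K}" "t0 \<le> \<phi> i" for i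
    proof -
      have e: "\<phi> i = t0" using t0ge that by force
      have "cconst q K \<phi> t0 * \<phi> i = (1 - (real K - real (card M)) * q) / real (card M)"
        unfolding cconst_def us mc e using t0pos by simp
      also have "\<dots> \<ge> q" using cM Kq by (simp add: field_simps)
      finally show ?thesis .
    qed
    then show ?thesis unfolding Ts_def using t0in us cM t0pos by auto
  qed
  hence "Ts \<noteq> {}" by auto
  have eq: "tau_star q K \<phi> = Min Ts" unfolding tau_star_def Ts_def by simp
  show ?thesis unfolding eq using fin \<open>Ts \<noteq> {}\<close> by auto
qed


lemma tau_props:
  fixes \<phi> :: "nat \<Rightarrow> real" and q :: real and K :: nat
  assumes K: "K \<ge> 1" and q: "0 < q" and Kq: "real K * q < 1"
    and nn: "\<forall>i\<in>{1..K}. 0 \<le> \<phi> i" and s1: "(\<Sum>i\<in>{1..K}. \<phi> i) = 1"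
  defines "\<tau> \<equiv> tau_star q K \<phi>"
  defines "c \<equiv> cconst q K \<phi> \<tau>"
  shows "0 < upper_sum K \<phi> \<tau>" "\<And>i. i\<in>{1..K} \<Longrightarrow> \<tau> \<le> \<phi> i \<Longrightarrow> q \<le> c * \<phi> i"
    "c > 0" "\<And>i. i\<in>{1..K} \<Longrightarrow> \<phi> i < \<tau> \<Longrightarrow> c * \<phi> i \<le> q"
    "c * upper_sum K \<phi> \<tau> = 1 - real (mcount K \<phi> \<tau>) * q"
proof -
  define Ts where "Ts \<equiv> {\<tau>. \<tau> \<in> \<phi> ` {1..K} \<and> 0 < upper_sum K \<phi> \<tau> \<and>
        (\<forall>i\<in>{1..K}. \<tau> \<le> \<phi> i \<longrightarrow> q \<le> cconst q K \<phi> \<tau> * \<phi> i)}"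
  have TI: "\<tau> \<in> Ts" and Tmin: "\<And>t. t \<in> Ts \<Longrightarrow> \<tau> \<le> t"
    using tau_in[OF assms(1-5)] unfolding Ts_def \<tau>_def by auto
  show Spos: "0 < upper_sum K \<phi> \<tau>" using TI unfolding Ts_def by auto
  show Aq: "\<And>i. i\<in>{1..K} \<Longrightarrow> \<tau> \<le> \<phi> i \<Longrightarrow> q \<le> c * \<phi> i" using TI unfolding Ts_def c_def by auto
  have "mcount K \<phi> \<tau> \<le> K" unfolding mcount_def
    by (metis (no_types, lifting) card_atLeastAtMost card_mono diff_Suc_1 finite_atLeastAtMost mem_Collect_eq subsetI)
  hence "real (mcount K \<phi> \<tau>) * q \<le> real K * q" using q by (simp add: mult_right_mono)
  hence num: "1 - real (mcount K \<phi> \<tau>) * q > 0" using Kq by linarith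
  show cpos: "c > 0" unfolding c_def cconst_def using num Spos by simp
  show cS: "c * upper_sum K \<phi> \<tau> = 1 - real (mcount K \<phi> \<tau>) * q"
    unfolding c_def cconst_def using Spos by simp
  show "c * \<phi> j \<le> q" if j: "j\<in>{1..K}" "\<phi> j < \<tau>" for j
  proof (rule ccontr)
    assume "\<not> c * \<phi> j \<le> q"
    hence cj: "c * \<phi> j > q" by simp
    define V where "V = {v\<in>\<phi> ` {1..K}. v < \<tau>}"
    have Vfin: "finite V" unfolding V_def by auto
    have jV: "\<phi> j \<in> V" unfolding V_def using j by auto
    define t' where "t' = Max V"
    have t'V: "t' \<in> V" unfolding t'_def using Vfin jV by (intro Max_in) auto
    have jt': "\<phi> j \<le> t'" unfolding t'_def using Vfin jV by auto
    have t'lt: "t' < \<tau>" using t'V unfolding V_def by auto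
    have gap: "\<phi> i = t'" if "i \<in> {1..K}" "t' \<le> \<phi> i" "\<phi> i < \<tau>" for i
    proof -
      have "\<phi> i \<in> V" unfolding V_def using that by auto
      hence "\<phi> i \<le> t'" unfolding t'_def using Vfin by auto
      thus ?thesis using that by simp
    qed
    have ct': "c * t' > q" using cj jt' cpos by (smt (verit) mult_left_mono)
    hence t'pos: "t' > 0" using cpos q by (smt (verit) mult_nonneg_nonpos)
    define A where "A = {i\<in>{1..K}. \<tau> \<le> \<phi> i}"
    define D where "D = {i\<in>{1..K}. \<phi> i = t'}"
    have A'eq: "{i\<in>{1..K}. t' \<le> \<phi> i} = A \<union> D" unfolding A_def D_def using gap t'lt by force
    have AD: "A \<inter> D = {}" unfolding A_def D_def using t'lt by auto
    have S'eq: "upper_sum K \<phi> t' = upper_sum K \<phi> \<tau> + real (card D) * t'"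
    proof -
      have "upper_sum K \<phi> t' = sum \<phi> (A \<union> D)" unfolding upper_sum_def A'eq by simp
      also have "\<dots> = sum \<phi> A + sum \<phi> D" by (rule sum.union_disjoint) (use AD in \<open>auto simp: A_def D_def\<close>)
      also have "sum \<phi> D = real (card D) * t'" unfolding D_def by simp
      finally show ?thesis unfolding upper_sum_def A_def by simp
    qed
    have cardA': "card (A \<union> D) = card A + card D" by (rule card_Un_disjoint) (use AD in \<open>auto simp: A_def D_def\<close>)
    have m1: "real (mcount K \<phi> \<tau>) + real (card A) = real K" using mcount_split[of K \<phi> \<tau>] unfolding A_def .
    have m2: "real (mcount K \<phi> t') + real (card (A \<union> D)) = real K" using mcount_split[of K \<phi> t'] unfolding A'eq .
    have num': "1 - real (mcount K \<phi> t') * q = c * upper_sum K \<phi> \<tau> + real (card D) * q"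
    proof -
      have "real (mcount K \<phi> t') = real (mcount K \<phi> \<tau>) - real (card D)" using m1 m2 cardA' by simp
      hence "real (mcount K \<phi> t') * q = real (mcount K \<phi> \<tau>) * q - real (card D) * q"
        by (simp add: left_diff_distrib)
      thus ?thesis using cS by linarith
    qed
    define S where "S = upper_sum K \<phi> \<tau>"
    define d where "d = real (card D)"
    have d0: "d \<ge> 0" unfolding d_def by simp
    define c' where "c' = cconst q K \<phi> t'"
    have c'eq: "c' = (c * S + d * q) / (S + d * t')"
      unfolding c'_def cconst_def num' S'eq S_def d_def by simp
    have Sp: "S > 0" using Spos S_def by simp
    have den: "S + d * t' > 0" using Sp d0 t'pos by (smt (verit) mult_nonneg_nonneg)
    have c'0: "c' \<ge> 0" unfolding c'eq using den cpos Sp d0 q by simp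
    have key: "q \<le> c' * t'"
    proof -
      have "q * (S + d * t') \<le> (c * S + d * q) * t'"
        using ct' Sp by (smt (verit) mult.commute distrib_left distrib_right mult_strict_right_mono mult.assoc)
      thus ?thesis unfolding c'eq using den by (simp add: field_simps)
    qed
    have "t' \<in> Ts"
    proof -
      have "t' \<in> \<phi> ` {1..K}" using t'V unfolding V_def by auto
      moreover have "0 < upper_sum K \<phi> t'" using S'eq Sp d0 t'pos unfolding S_def d_def
        by (smt (verit) mult_nonneg_nonneg)
      moreover have "q \<le> cconst q K \<phi> t' * \<phi> i" if "i\<in>{1..K}" "t' \<le> \<phi> i" for i
        using key mult_left_mono[OF that(2) c'0] unfolding c'_def by linarith
      ultimately show ?thesis unfolding Ts_def by auto
    qed
    hence "\<tau> \<le> t'" by (rule Tmin)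
    thus False using t'lt by simp
  qed
qed


lemma count_sum:
  fixes g :: "nat \<Rightarrow> real" and N K :: nat and y :: "nat \<Rightarrow> nat"
  assumes "\<forall>u\<in>{1..N}. y u \<in> {1..K}"
  shows "(\<Sum>u\<in>{1..N}. g (y u)) = (\<Sum>i\<in>{1..K}. real (card {u\<in>{1..N}. y u = i}) * g i)"
proof -
  have "(\<Sum>u\<in>{1..N}. g (y u)) = (\<Sum>i\<in>{1..K}. \<Sum>u\<in>{u\<in>{1..N}. y u = i}. g (y u))"
    by (rule sum.group[symmetric]) (use assms in auto)
  also have "\<dots> = (\<Sum>i\<in>{1..K}. real (card {u\<in>{1..N}. y u = i}) * g i)"
    by (rule sum.cong) auto
  finally show ?thesis .
qed

theorem theorem1:
  fixes K N :: nat and p q :: real and y :: "nat \<Rightarrow> nat"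
  assumes "K \<ge> 2" and "0 < q" and "q < p" and "q = (1 - p) / (real K - 1)"
    and "N \<ge> 1" and "\<forall>u\<in>{1..N}. y u \<in> {1..K}"
  shows "(\<exists>!\<theta>. \<theta> \<in> simplex K \<and> (\<forall>\<theta>'\<in>simplex K. rr_lik p q N y \<theta>' \<le> rr_lik p q N y \<theta>))
       \<and> MLE_star p q K (hist N y) \<in> simplex K
       \<and> (\<forall>\<theta>'\<in>simplex K. rr_lik p q N y \<theta>' \<le> rr_lik p q N y (MLE_star p q K (hist N y)))"
proof -
  note K2 = assms(1) and q0 = assms(2) and qp = assms(3) and N1 = assms(5) and yK = assms(6)
  have pq1: "p + (real K - 1) * q = 1" using assms(1,4) by (simp add: field_simps)
  have Kq: "real K * q = 1 - (p - q)" using pq1 by (simp add: algebra_simps)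
  have Kq1: "real K * q < 1" using Kq qp by simp
  have pq0: "p - q > 0" using qp by simp
  define \<phi> where "\<phi> = hist N y"
  define n where "n i = real (card {u\<in>{1..N}. y u = i})" for i
  have Npos: "real N > 0" using N1 by simp
  have \<phi>n: "\<phi> i = n i / real N" for i unfolding \<phi>_def hist_def n_def by simp
  have nn: "\<forall>i\<in>{1..K}. 0 \<le> \<phi> i" unfolding \<phi>n n_def by simp
  have cs: "(\<Sum>u\<in>{1..N}. g (y u)) = (\<Sum>i\<in>{1..K}. n i * g i)" for g
    unfolding n_def by (rule count_sum[OF yK])
  have s1: "(\<Sum>i\<in>{1..K}. \<phi> i) = 1"
  proof -
    have "real N = (\<Sum>i\<in>{1..K}. n i)" using cs[of "\<lambda>_. 1"] by simp
    thus ?thesis unfolding \<phi>n using Npos by (simp add: sum_divide_distrib[symmetric])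
  qed
  define \<tau> where "\<tau> = tau_star q K \<phi>"
  define c where "c = cconst q K \<phi> \<tau>"
  have K1: "K \<ge> 1" using K2 by simp
  note TP = tau_props[OF K1 q0 Kq1 nn s1, folded \<tau>_def, folded c_def]
  have Aq: "\<And>i. i\<in>{1..K} \<Longrightarrow> \<tau> \<le> \<phi> i \<Longrightarrow> q \<le> c * \<phi> i" by (rule TP(2))
  have cpos: "c > 0" by (rule TP(3))
  have Bq: "\<And>i. i\<in>{1..K} \<Longrightarrow> \<phi> i < \<tau> \<Longrightarrow> c * \<phi> i \<le> q" by (rule TP(4))
  have cS: "c * upper_sum K \<phi> \<tau> = 1 - real (mcount K \<phi> \<tau>) * q" by (rule TP(5))
  define ts where "ts = MLE_star p q K \<phi>"
  have ts_eq: "ts i = (if i \<in> {1..K} \<and> \<tau> \<le> \<phi> i then (c * \<phi> i - q) / (p - q) else 0)" for i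
    unfolding ts_def MLE_star_def \<tau>_def c_def by simp
  define zs where "zs i = (if \<tau> \<le> \<phi> i then c * \<phi> i else q)" for i
  have zs_eq: "q + (p - q) * ts i = zs i" if "i \<in> {1..K}" for i
    unfolding ts_eq zs_def using that pq0 by auto
  have zs_ge: "zs i \<ge> q" if "i \<in> {1..K}" for i unfolding zs_def using Aq that by auto
  have ts_simp: "ts \<in> simplex K"
  proof -
    have "(\<Sum>i\<in>{1..K}. ts i) = 1"
    proof -
      define A where "A = {i\<in>{1..K}. \<tau> \<le> \<phi> i}"
      have "(\<Sum>i\<in>{1..K}. ts i) = (\<Sum>i\<in>A. (c * \<phi> i - q) / (p - q))"
        unfolding ts_eq A_def by (simp add: sum.inter_filter[symmetric])
      also have "\<dots> = (c * (\<Sum>i\<in>A. \<phi> i) - real (card A) * q) / (p - q)"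
        by (simp add: sum_divide_distrib[symmetric] sum_subtractf sum_distrib_left)
      also have "\<dots> = (1 - real K * q) / (p - q)"
      proof -
        have "real (mcount K \<phi> \<tau>) = real K - real (card A)"
          using mcount_split[of K \<phi> \<tau>] unfolding A_def by simp
        hence "real (mcount K \<phi> \<tau>) * q = real K * q - real (card A) * q" by (simp add: left_diff_distrib)
        hence "c * (\<Sum>i\<in>A. \<phi> i) - real (card A) * q = 1 - real K * q"
          using cS unfolding upper_sum_def A_def[symmetric] by linarith
        thus ?thesis by simp
      qed
      also have "\<dots> = 1" using Kq pq0 by simp
      finally show ?thesis .
    qed
    moreover have "\<forall>i\<in>{1..K}. 0 \<le> ts i" unfolding ts_eq using Aq pq0 by auto
    moreover have "\<forall>i. i \<notin> {1..K} \<longrightarrow> ts i = 0" unfolding ts_eq by auto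
    ultimately show ?thesis unfolding simplex_def by auto
  qed
  have sumzs: "(\<Sum>i\<in>{1..K}. zs i) = 1"
  proof -
    have "(\<Sum>i\<in>{1..K}. zs i) = (\<Sum>i\<in>{1..K}. q + (p - q) * ts i)" using zs_eq by simp
    also have "\<dots> = real K * q + (p - q) * 1"
      using ts_simp unfolding simplex_def by (simp add: sum.distrib sum_distrib_left[symmetric])
    finally show ?thesis using Kq by simp
  qed
  have Lts: "rr_lik p q N y ts = (\<Prod>u\<in>{1..N}. zs (y u))"
    unfolding rr_lik_def using zs_eq yK by (intro prod.cong) auto
  have main: "rr_lik p q N y \<theta> \<le> rr_lik p q N y ts \<and>
      (rr_lik p q N y ts \<le> rr_lik p q N y \<theta> \<longrightarrow> \<theta> = ts)" if th: "\<theta> \<in> simplex K" for \<theta>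
  proof -
    define z where "z i = q + (p - q) * \<theta> i" for i
    have z_ge: "z i \<ge> q" if "i \<in> {1..K}" for i
      using th that pq0 unfolding z_def simplex_def by simp
    have sumz: "(\<Sum>i\<in>{1..K}. z i) = 1"
    proof -
      have "(\<Sum>i\<in>{1..K}. z i) = real K * q + (p - q) * 1"
        using th unfolding simplex_def z_def by (simp add: sum.distrib sum_distrib_left[symmetric])
      thus ?thesis using Kq by simp
    qed
    have Lth: "rr_lik p q N y \<theta> = (\<Prod>u\<in>{1..N}. z (y u))" unfolding rr_lik_def z_def by simp
    have zpos: "z (y u) > 0" and zspos: "zs (y u) > 0" if "u \<in> {1..N}" for u
      using z_ge zs_ge yK that q0 by (meson less_le_trans)+
    define r where "r i = z i / zs i" for i
    have rpos: "r (y u) > 0" if "u \<in> {1..N}" for u unfolding r_def using zpos zspos that by simp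
    define e where "e u = r (y u) - 1 - ln (r (y u))" for u
    have e0: "e u \<ge> 0" if "u \<in> {1..N}" for u unfolding e_def using ln_le_minus_one[OF rpos[OF that]] by simp
    define f where "f i = (z i - zs i) - c * \<phi> i * (r i - 1)" for i
    have f0: "f i \<ge> 0" if i: "i \<in> {1..K}" for i
    proof (cases "\<tau> \<le> \<phi> i")
      case True
      have "c * \<phi> i > 0" using Aq[OF i True] q0 by simp
      hence "c \<noteq> 0" "\<phi> i \<noteq> 0" by auto
      hence "c * \<phi> i * (z i / (c * \<phi> i) - 1) = z i - c * \<phi> i" by (simp add: right_diff_distrib)
      thus ?thesis unfolding f_def r_def zs_def using True by simp
    next
      case False
      hence zsq: "zs i = q" unfolding zs_def by simp
      have "c * \<phi> i * (z i - q) \<le> q * (z i - q)"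
        using Bq[OF i] False z_ge[OF i] by (intro mult_right_mono) auto
      hence "c * \<phi> i * (r i - 1) \<le> z i - q" unfolding r_def zsq using q0
        by (simp add: field_simps)
      thus ?thesis unfolding f_def zsq by simp
    qed
    have lnsum: "ln (rr_lik p q N y \<theta>) - ln (rr_lik p q N y ts) = (\<Sum>u\<in>{1..N}. ln (r (y u)))"
    proof -
      have "ln (rr_lik p q N y \<theta>) = (\<Sum>u\<in>{1..N}. ln (z (y u)))"
        unfolding Lth proof (rule ln_prod)
          show "\<And>u. u \<in> {1..N} \<Longrightarrow> z (y u) \<noteq> 0" using zpos by (metis less_irrefl)
        qed simp
      moreover have "ln (rr_lik p q N y ts) = (\<Sum>u\<in>{1..N}. ln (zs (y u)))"
        unfolding Lts proof (rule ln_prod)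
          show "\<And>u. u \<in> {1..N} \<Longrightarrow> zs (y u) \<noteq> 0" using zspos by (metis less_irrefl)
        qed simp
      moreover have "(\<Sum>u\<in>{1..N}. ln (r (y u))) = (\<Sum>u\<in>{1..N}. ln (z (y u)) - ln (zs (y u)))"
        unfolding r_def using zpos zspos proof (intro sum.cong refl)
          fix u assume u: "u \<in> {1..N}"
          show "ln (z (y u) / zs (y u)) = ln (z (y u)) - ln (zs (y u))"
            using zpos[OF u] zspos[OF u] by (rule ln_divide_pos)
        qed
      ultimately show ?thesis by (simp add: sum_subtractf)
    qed
    have s_r: "(\<Sum>u\<in>{1..N}. r (y u) - 1) = real N * (\<Sum>i\<in>{1..K}. \<phi> i * (r i - 1))"
      unfolding cs[of "\<lambda>i. r i - 1"] \<phi>n using Npos by (simp add: sum_distrib_left)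
    have s_f: "c * (\<Sum>i\<in>{1..K}. \<phi> i * (r i - 1)) = - (\<Sum>i\<in>{1..K}. f i)"
    proof -
      have "(\<Sum>i\<in>{1..K}. f i) = (\<Sum>i\<in>{1..K}. z i - zs i) - (\<Sum>i\<in>{1..K}. c * \<phi> i * (r i - 1))"
        unfolding f_def by (simp add: sum_subtractf)
      also have "(\<Sum>i\<in>{1..K}. z i - zs i) = 0" using sumz sumzs by (simp add: sum_subtractf)
      finally show ?thesis by (simp add: sum_distrib_left mult.assoc)
    qed
    have key: "(\<Sum>u\<in>{1..N}. ln (r (y u))) = - (real N / c) * (\<Sum>i\<in>{1..K}. f i) - (\<Sum>u\<in>{1..N}. e u)"
    proof -
      have "(\<Sum>u\<in>{1..N}. ln (r (y u))) = (\<Sum>u\<in>{1..N}. r (y u) - 1) - (\<Sum>u\<in>{1..N}. e u)"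
        unfolding e_def by (simp add: sum_subtractf)
      also have "(\<Sum>u\<in>{1..N}. r (y u) - 1) = - (real N / c) * (\<Sum>i\<in>{1..K}. f i)"
      proof -
        have "(\<Sum>i\<in>{1..K}. \<phi> i * (r i - 1)) = (c * (\<Sum>i\<in>{1..K}. \<phi> i * (r i - 1))) / c"
          using cpos by simp
        also have "\<dots> = - (\<Sum>i\<in>{1..K}. f i) / c" unfolding s_f by simp
        finally show ?thesis unfolding s_r by simp
      qed
      finally show ?thesis .
    qed
    have Sf: "(\<Sum>i\<in>{1..K}. f i) \<ge> 0" using f0 by (rule sum_nonneg)
    have Se: "(\<Sum>u\<in>{1..N}. e u) \<ge> 0" using e0 by (rule sum_nonneg)
    have NcSf: "(real N / c) * (\<Sum>i\<in>{1..K}. f i) \<ge> 0" using Sf Npos cpos by simp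
    have Lpos: "rr_lik p q N y \<theta> > 0" unfolding Lth using zpos by (rule prod_pos)
    have Lspos: "rr_lik p q N y ts > 0" unfolding Lts using zspos by (rule prod_pos)
    have le: "rr_lik p q N y \<theta> \<le> rr_lik p q N y ts"
    proof -
      have "ln (rr_lik p q N y \<theta>) \<le> ln (rr_lik p q N y ts)" using lnsum key NcSf Se by linarith
      thus ?thesis using Lpos Lspos by simp
    qed
    moreover have "\<theta> = ts" if ge: "rr_lik p q N y ts \<le> rr_lik p q N y \<theta>"
    proof -
      have "ln (rr_lik p q N y ts) \<le> ln (rr_lik p q N y \<theta>)" using ge Lpos Lspos by simp
      hence "(real N / c) * (\<Sum>i\<in>{1..K}. f i) + (\<Sum>u\<in>{1..N}. e u) \<le> 0" using lnsum key by linarith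
      hence "(real N / c) * (\<Sum>i\<in>{1..K}. f i) = 0" and "(\<Sum>u\<in>{1..N}. e u) = 0" using NcSf Se by linarith+
      hence SF: "(\<Sum>i\<in>{1..K}. f i) = 0" using Npos cpos by simp
      have fz: "f i = 0" if "i \<in> {1..K}" for i 
      proof -
        have "(\<Sum>i\<in>{1..K}. f i) = 0 \<longleftrightarrow> (\<forall>i\<in>{1..K}. f i = 0)"
          by (rule sum_nonneg_eq_0_iff) (simp, rule f0)
        thus ?thesis using SF that by blast
      qed
      have ez: "e u = 0" if "u \<in> {1..N}" for u 
      proof -
        have "(\<Sum>u\<in>{1..N}. e u) = 0 \<longleftrightarrow> (\<forall>u\<in>{1..N}. e u = 0)"
          by (rule sum_nonneg_eq_0_iff) (simp, rule e0)
        thus ?thesis using \<open>(\<Sum>u\<in>{1..N}. e u) = 0\<close> that by blast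
      qed
      have zz: "z i = zs i" if i: "i \<in> {1..K}" for i
      proof (cases "\<exists>u\<in>{1..N}. y u = i")
        case True
        then obtain u where u: "u \<in> {1..N}" "y u = i" by auto
        have "ln (r i) = r i - 1" using ez[OF u(1)] u unfolding e_def by simp
        hence "r i = 1" using ln_eq_minus_one rpos[OF u(1)] u(2) by auto
        thus ?thesis unfolding r_def using zspos[OF u(1)] u(2) by simp
      next
        case False
        hence "{u\<in>{1..N}. y u = i} = {}" by auto
        hence "\<phi> i = 0" unfolding \<phi>n n_def by simp
        hence "\<not> \<tau> \<le> \<phi> i" using Aq[OF i] q0 by fastforce
        hence "zs i = q" unfolding zs_def by simp
        thus ?thesis using fz[OF i] \<open>\<phi> i = 0\<close> unfolding f_def by simp
      qed
      show ?thesis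
      proof
        fix i
        show "\<theta> i = ts i"
        proof (cases "i \<in> {1..K}")
          case True
          hence "q + (p - q) * \<theta> i = q + (p - q) * ts i" using zz zs_eq unfolding z_def by simp
          thus ?thesis using pq0 by simp
        next
          case False
          have "ts i = 0" using False unfolding ts_eq by auto
          moreover have "\<theta> i = 0" using th False unfolding simplex_def by blast
          ultimately show ?thesis by simp
        qed
      qed
    qed
    ultimately show ?thesis by blast
  qed
  show ?thesis
  proof (intro conjI)
    show "\<exists>!\<theta>. \<theta> \<in> simplex K \<and> (\<forall>\<theta>'\<in>simplex K. rr_lik p q N y \<theta>' \<le> rr_lik p q N y \<theta>)"
    proof (rule ex1I[of _ ts])
      show "ts \<in> simplex K \<and> (\<forall>\<theta>'\<in>simplex K. rr_lik p q N y \<theta>' \<le> rr_lik p q N y ts)"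
        using ts_simp main by blast
      fix \<theta> assume "\<theta> \<in> simplex K \<and> (\<forall>\<theta>'\<in>simplex K. rr_lik p q N y \<theta>' \<le> rr_lik p q N y \<theta>)"
      thus "\<theta> = ts" using main ts_simp by blast
    qed
    show "MLE_star p q K (hist N y) \<in> simplex K" using ts_simp unfolding ts_def \<phi>_def .
    show "\<forall>\<theta>'\<in>simplex K. rr_lik p q N y \<theta>' \<le> rr_lik p q N y (MLE_star p q K (hist N y))"
      using main unfolding ts_def \<phi>_def by blast
  qed
qed

end
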